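(* Let $K>0$, $\mu>0$, $h>0$, and $r=h/H\in(0,1)$. Consider the homogeneous controlled patch problem (context) and suppose that, for some $k>0$, $T(x,t)=e^{-Kk^2t}\phi(x)$ is a solution with $\phi\not\equiv0$ even of the form $$\phi(x)=\begin{cases}A\cos kx, & |x|<h/4,\\ C+D\cos[k(x\mp\tfrac h2)]\pm E\sin[k(x\mp \tfrac h2)], & h/4\le \pm x\le 3h/4,\\ B\cos[k(x\mp h)], & 3h/4\le \pm x\le h,\end{cases}$$ with $\phi,\phi'$ continuous and $2h$-periodic. Then $$\cos\frac{kh}{2}\,\sin\frac{kh}{4}\left[\Big(\frac{1-7r^2/48}{1-r^2/48}\Big)\frac{4}{kh}\sin\frac{kh}{4}+\Big(\frac{k^2h^2}{\mu}-1\Big)\cos\frac{kh}{4}\right]=0 .$$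
   Context: Homogeneous controlled patch problem (governing perturbations about an equilibrium). A field $T(x,t)$, $2h$-periodic in $x$, satisfies $T_t=KT_{xx}+\frac{K\mu}{h^2}g(x,T)$, where $g$ is piecewise constant: on the right action region $h/4<x<3h/4$, $g=T_{\mathrm{int}}-\frac2h\int_{h/4}^{3h/4}T\,dx$; on the left action region $-3h/4<x<-h/4$, $g=T_{\mathrm{int}}-\frac2h\int_{-3h/4}^{-h/4}T\,dx$; and $g=0$ on the core $|x|<h/4$ and buffer $3h/4<|x|\le h$. Here $T_c=\frac2h\int_{-h/4}^{h/4}T\,dx$ is the core average and, with $r=h/H$, $$T_{\mathrm{int}}=T_c\,\frac{1-13r^2/48}{1-r^2/48}$$ (this is the action-region average of the parabolic interpolant through zero boundary values at $x=\pm H$ with core average $T_c$). Solutions are understood piecewise, with $T,T_x$ continuous across region boundaries. *)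

theory Defs
  imports "HOL-Analysis.Analysis"
begin

text \<open>Action-region average of the parabolic interpolant: T_int = T_c * factor(r), r = h/H.\<close>
definition Tint_factor :: "real \<Rightarrow> real" where
  "Tint_factor r = (1 - 13 * r^2 / 48) / (1 - r^2 / 48)"

definition core_avg :: "real \<Rightarrow> (real \<Rightarrow> real \<Rightarrow> real) \<Rightarrow> real \<Rightarrow> real" where
  "core_avg h T t = (2 / h) * integral {-h/4..h/4} (\<lambda>y. T y t)"

definition patch_g :: "real \<Rightarrow> real \<Rightarrow> (real \<Rightarrow> real \<Rightarrow> real) \<Rightarrow> real \<Rightarrow> real \<Rightarrow> real" where
  "patch_g h H T x t =
     (let Tint = core_avg h T t * Tint_factor (h / H) in
      if h/4 < x \<and> x < 3*h/4 then Tint - (2 / h) * integral {h/4..3*h/4} (\<lambda>y. T y t)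
      else if -3*h/4 < x \<and> x < -h/4 then Tint - (2 / h) * integral {-3*h/4..-h/4} (\<lambda>y. T y t)
      else 0)"

text \<open>T solves T_t = K T_xx + (K mu / h^2) g(x,T) piecewise, i.e. at every time t and every
  point x of (-h,h] lying in the interior of a region (core, action regions, buffers;
  x = h is interior to the buffer by 2h-periodicity).\<close>
definition solves_patch ::
  "real \<Rightarrow> real \<Rightarrow> real \<Rightarrow> real \<Rightarrow> (real \<Rightarrow> real \<Rightarrow> real) \<Rightarrow> bool" where
  "solves_patch K \<mu> h H T \<longleftrightarrow>
     (\<forall>t x. (\<bar>x\<bar> < h/4 \<or> (h/4 < \<bar>x\<bar> \<and> \<bar>x\<bar> < 3*h/4) \<or> (3*h/4 < \<bar>x\<bar> \<and> \<bar>x\<bar> \<le> h)) \<longrightarrow>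
        deriv (\<lambda>s. T x s) t =
          K * deriv (\<lambda>y. deriv (\<lambda>z. T z t) y) x + K * \<mu> / h^2 * patch_g h H T x t)"

end

theory Submission
  imports Defs
begin

lemma eq_left:
  fixes f g :: "real \<Rightarrow> real"
  assumes "isCont f a" "isCont g a" "\<delta> > 0" "\<forall>x. a-\<delta><x \<and> x<a \<longrightarrow> f x = g x"
  shows "f a = g a"
proof -
  have 1: "(f \<longlongrightarrow> f a) (at_left a)" using assms(1) isCont_def tendsto_mono at_le by (metis at_within_le_at)
  have 2: "(g \<longlongrightarrow> g a) (at_left a)" using assms(2) isCont_def tendsto_mono by (metis at_within_le_at)
  have ev: "eventually (\<lambda>x. x \<in> {a-\<delta><..<a}) (at_left a)" using eventually_at_left_real assms(3) by simp
  have "eventually (\<lambda>x. f x = g x) (at_left a)" using eventually_mono[OF ev] assms(4) by auto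
  hence "(g \<longlongrightarrow> f a) (at_left a)" using 1 tendsto_cong by fastforce
  thus ?thesis using 2 tendsto_unique trivial_limit_at_left_real by blast
qed

lemma eq_right:
  fixes f g :: "real \<Rightarrow> real"
  assumes "isCont f a" "isCont g a" "\<delta> > 0" "\<forall>x. a<x \<and> x<a+\<delta> \<longrightarrow> f x = g x"
  shows "f a = g a"
proof -
  have 1: "(f \<longlongrightarrow> f a) (at_right a)" using assms(1) isCont_def tendsto_mono by (metis at_within_le_at)
  have 2: "(g \<longlongrightarrow> g a) (at_right a)" using assms(2) isCont_def tendsto_mono by (metis at_within_le_at)
  have ev: "eventually (\<lambda>x. x \<in> {a<..<a+\<delta>}) (at_right a)" using eventually_at_right_real assms(3) by simp
  have "eventually (\<lambda>x. f x = g x) (at_right a)" using eventually_mono[OF ev] assms(4) by auto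
  hence "(g \<longlongrightarrow> f a) (at_right a)" using 1 tendsto_cong by fastforce
  thus ?thesis using 2 tendsto_unique trivial_limit_at_right_real by blast
qed

lemma deriv_loc:
  fixes \<phi> f :: "real \<Rightarrow> real"
  assumes "open S" "x \<in> S" "\<forall>y\<in>S. \<phi> y = f y" "(f has_real_derivative f') (at x)"
  shows "deriv \<phi> x = f'"
proof -
  have "(\<phi> has_real_derivative f') (at x)"
    using has_field_derivative_transform_within_open[OF assms(4) assms(1) assms(2)] assms(3) by auto
  thus ?thesis by (rule DERIV_imp_deriv)
qed

lemma ftc_int:
  fixes F f :: "real \<Rightarrow> real"
  assumes "a \<le> b" "\<forall>x\<in>{a..b}. (F has_real_derivative f x) (at x)"
  shows "integral {a..b} f = F b - F a"
proof -
  have "(f has_integral F b - F a) {a..b}"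
    apply (rule fundamental_theorem_of_calculus[OF assms(1)])
    using assms(2) has_real_derivative_iff_has_vector_derivative has_vector_derivative_at_within by blast
  thus ?thesis by (rule integral_unique)
qed

lemma Gl: fixes r :: real assumes "1 - r^2/48 \<noteq> 0"
  shows "(1 - 7*r^2/48)/(1 - r^2/48) = (1 + (1 - 13*r^2/48)/(1 - r^2/48))/2"
proof -
  define d where "d = 1 - r^2/48"
  have d: "d \<noteq> 0" using assms d_def by simp
  have e: "1 - 7*r^2/48 = (d + (1 - 13*r^2/48))/2" using d_def by simp
  have "(1 - 7*r^2/48)/d = ((d + (1 - 13*r^2/48))/2)/d" by (simp only: e)
  also have "\<dots> = ((d + (1 - 13*r^2/48))/d)/2" by simp
  also have "(d + (1 - 13*r^2/48))/d = 1 + (1 - 13*r^2/48)/d" using d by (simp add: add_divide_distrib)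
  finally show ?thesis using d_def by simp
qed

theorem mainTheorem2:
  fixes K \<mu> h H k A B C D E :: real and \<phi> :: "real \<Rightarrow> real"
  assumes "K > 0" and "\<mu> > 0" and "h > 0"
    and "0 < h / H" and "h / H < 1"
    and "k > 0"
    and phi_diff: "\<forall>x. \<phi> differentiable (at x)"
    and phi'_cont: "continuous_on UNIV (deriv \<phi>)"
    and periodic: "\<forall>x. \<phi> (x + 2*h) = \<phi> x"
    and even: "\<forall>x. \<phi> (-x) = \<phi> x"
    and nonzero: "\<exists>x. \<phi> x \<noteq> 0"
    and core: "\<forall>x. \<bar>x\<bar> < h/4 \<longrightarrow> \<phi> x = A * cos (k * x)"
    and act_r: "\<forall>x. h/4 \<le> x \<and> x \<le> 3*h/4 \<longrightarrow>
                  \<phi> x = C + D * cos (k * (x - h/2)) + E * sin (k * (x - h/2))"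
    and act_l: "\<forall>x. h/4 \<le> -x \<and> -x \<le> 3*h/4 \<longrightarrow>
                  \<phi> x = C + D * cos (k * (x + h/2)) - E * sin (k * (x + h/2))"
    and buf_r: "\<forall>x. 3*h/4 \<le> x \<and> x \<le> h \<longrightarrow> \<phi> x = B * cos (k * (x - h))"
    and buf_l: "\<forall>x. 3*h/4 \<le> -x \<and> -x \<le> h \<longrightarrow> \<phi> x = B * cos (k * (x + h))"
    and sol: "solves_patch K \<mu> h H (\<lambda>x t. exp (- K * k^2 * t) * \<phi> x)"
  shows "cos (k*h/2) * sin (k*h/4) *
           (((1 - 7 * (h/H)^2 / 48) / (1 - (h/H)^2 / 48)) * (4 / (k*h)) * sin (k*h/4)
            + ((k^2 * h^2) / \<mu> - 1) * cos (k*h/4)) = 0"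
proof -
  define u where "u = k*h/4"
  define c where "c = cos u"
  define s where "s = sin u"
  have hpos: "h > 0" using assms by simp
  have cont: "\<And>x. isCont \<phi> x" using phi_diff differentiable_imp_continuous_within by blast
  have dcont: "\<And>x. isCont (deriv \<phi>) x" using phi'_cont continuous_on_eq_continuous_at by blast
  have f1d: "\<And>y. ((\<lambda>x. A * cos (k*x)) has_real_derivative (- A*k* sin (k*y))) (at y)"
    by (auto intro!: derivative_eq_intros)
  have f2d: "\<And>y. ((\<lambda>x. C + D * cos (k * (x - h/2)) + E * sin (k * (x - h/2))) has_real_derivative
      (- D*k* sin (k*(y-h/2)) + E*k* cos (k*(y-h/2)))) (at y)"
    by (auto intro!: derivative_eq_intros)
  have f3d: "\<And>y. ((\<lambda>x. B * cos (k * (x - h))) has_real_derivative (- B*k* sin (k*(y-h)))) (at y)"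
    by (auto intro!: derivative_eq_intros)
  have d1: "\<forall>y. -h/4 < y \<and> y < h/4 \<longrightarrow> deriv \<phi> y = - A*k* sin (k*y)"
  proof (intro allI impI)
    fix y assume y: "-h/4 < y \<and> y < h/4"
    show "deriv \<phi> y = - A*k* sin (k*y)"
      by (rule deriv_loc[of "{-h/4<..<h/4}" _ _ "\<lambda>x. A * cos (k*x)"]) (use y core f1d in auto)
  qed
  have d2: "\<forall>y. h/4 < y \<and> y < 3*h/4 \<longrightarrow> deriv \<phi> y = - D*k* sin (k*(y-h/2)) + E*k* cos (k*(y-h/2))"
  proof (intro allI impI)
    fix y assume y: "h/4 < y \<and> y < 3*h/4"
    show "deriv \<phi> y = - D*k* sin (k*(y-h/2)) + E*k* cos (k*(y-h/2))"
      by (rule deriv_loc[of "{h/4<..<3*h/4}" _ _ "\<lambda>x. C + D * cos (k * (x - h/2)) + E * sin (k * (x - h/2))"]) (use y act_r f2d in auto)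
  qed
  have d3: "\<forall>y. 3*h/4 < y \<and> y < h \<longrightarrow> deriv \<phi> y = - B*k* sin (k*(y-h))"
  proof (intro allI impI)
    fix y assume y: "3*h/4 < y \<and> y < h"
    show "deriv \<phi> y = - B*k* sin (k*(y-h))"
      by (rule deriv_loc[of "{3*h/4<..<h}" _ _ "\<lambda>x. B * cos (k * (x - h))"]) (use y buf_r f3d in auto)
  qed
  have a1: "k*(h/4) = u" "k*(h/4 - h/2) = -u" "k*(3*h/4 - h/2) = u" "k*(3*h/4 - h) = -u"
    by (auto simp: u_def field_simps)
  have V1: "\<phi> (h/4) = A*c"
  proof -
    have "\<phi> (h/4) = (\<lambda>x. A * cos (k*x)) (h/4)"
      by (rule eq_left[of _ _ _ "h/2"]) (use hpos core cont in \<open>auto intro!: continuous_intros\<close>)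
    thus ?thesis using a1 c_def by simp
  qed
  have V1': "\<phi> (h/4) = C + D*c - E* s" using act_r[rule_format, of "h/4"] hpos a1 c_def s_def by simp
  have V2: "\<phi> (3*h/4) = C + D*c + E* s" using act_r[rule_format, of "3*h/4"] hpos a1 c_def s_def by simp
  have V2': "\<phi> (3*h/4) = B*c" using buf_r[rule_format, of "3*h/4"] hpos a1 c_def s_def by simp
  have D1: "deriv \<phi> (h/4) = - A*k* s"
  proof -
    have "deriv \<phi> (h/4) = (\<lambda>x. - A*k* sin (k*x)) (h/4)"
      by (rule eq_left[of _ _ _ "h/2"]) (use hpos d1 dcont in \<open>auto intro!: continuous_intros\<close>)
    thus ?thesis using a1 s_def by simp
  qed
  have D1': "deriv \<phi> (h/4) = D*k* s + E*k*c"
  proof -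
    have "deriv \<phi> (h/4) = (\<lambda>y. - D*k* sin (k*(y-h/2)) + E*k* cos (k*(y-h/2))) (h/4)"
      by (rule eq_right[of _ _ _ "h/2"]) (use hpos d2 dcont in \<open>auto intro!: continuous_intros\<close>)
    thus ?thesis using a1 s_def c_def by simp
  qed
  have D2: "deriv \<phi> (3*h/4) = - D*k* s + E*k*c"
  proof -
    have "deriv \<phi> (3*h/4) = (\<lambda>y. - D*k* sin (k*(y-h/2)) + E*k* cos (k*(y-h/2))) (3*h/4)"
      by (rule eq_left[of _ _ _ "h/2"]) (use hpos d2 dcont in \<open>auto intro!: continuous_intros\<close>)
    thus ?thesis using a1 s_def c_def by simp
  qed
  have D2': "deriv \<phi> (3*h/4) = B*k* s"
  proof -
    have "deriv \<phi> (3*h/4) = (\<lambda>y. - B*k* sin (k*(y-h))) (3*h/4)"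
      by (rule eq_right[of _ _ _ "h/4"]) (use hpos d3 dcont in \<open>auto intro!: continuous_intros\<close>)
    thus ?thesis using a1 s_def by simp
  qed
  have kne: "k \<noteq> 0" using assms by simp
  have e1: "A * c = C + D * c - E * s" using V1 V1' by simp
  have "k * (- A * s) = k * (D * s + E * c)" using D1 D1' by (simp add: algebra_simps)
  then have e2: "- A * s = D * s + E * c" using mult_left_cancel[OF kne] by blast
  have e3: "B * c = C + D * c + E * s" using V2 V2' by simp
  have "k * (- D * s + E * c) = k * (B * s)" using D2 D2' by (simp add: algebra_simps)
  then have e4: "- D * s + E * c = B * s" using mult_left_cancel[OF kne] by blast
  have P: "deriv (\<lambda>s. exp (- K * k^2 * s) * \<phi> (h/2)) 0 =
      K * deriv (\<lambda>y. deriv (\<lambda>z. exp (- K * k^2 * 0) * \<phi> z) y) (h/2)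
      + K * \<mu> / h^2 * patch_g h H (\<lambda>x t. exp (- K * k^2 * t) * \<phi> x) (h/2) 0"
  proof -
    have cond: "\<bar>h/2\<bar> < h/4 \<or> (h/4 < \<bar>h/2\<bar> \<and> \<bar>h/2\<bar> < 3*h/4) \<or> (3*h/4 < \<bar>h/2\<bar> \<and> \<bar>h/2\<bar> \<le> h)"
      using hpos by auto
    show ?thesis using sol[unfolded solves_patch_def, THEN spec[of _ 0], THEN spec[of _ "h/2"]] cond by blast
  qed
  have T1: "deriv (\<lambda>s. exp (- K * k^2 * s) * \<phi> (h/2)) 0 = - K * k^2 * \<phi> (h/2)"
  proof (rule DERIV_imp_deriv)
    show "((\<lambda>s. exp (- K * k^2 * s) * \<phi> (h/2)) has_real_derivative (- K * k^2 * \<phi> (h/2))) (at 0)"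
      by (auto intro!: derivative_eq_intros)
  qed
  have ph2: "\<phi> (h/2) = C + D" using act_r[rule_format, of "h/2"] hpos by simp
  have T2: "deriv (\<lambda>y. deriv (\<lambda>z. exp (- K * k^2 * 0) * \<phi> z) y) (h/2) = - D * k^2"
  proof -
    have "(\<lambda>z. exp (- K * k^2 * 0) * \<phi> z) = \<phi>" by simp
    moreover have "deriv (deriv \<phi>) (h/2) = - D * k^2"
    proof (rule deriv_loc[of "{h/4<..<3*h/4}" _ _ "\<lambda>y. - D*k * sin (k*(y-h/2)) + E*k * cos (k*(y-h/2))"])
      show "((\<lambda>y. - D*k * sin (k*(y-h/2)) + E*k * cos (k*(y-h/2))) has_real_derivative - D * k^2) (at (h/2))"
        by (auto intro!: derivative_eq_intros simp: power2_eq_square)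
    qed (use hpos d2 in auto)
    ultimately show ?thesis by simp
  qed
  have V1c: "\<phi> (h/4) = A * cos (k*(h/4))" using V1 a1(1) c_def by simp
  have V1m: "\<phi> (-h/4) = A * cos (k*(-h/4))" using even[rule_format, of "h/4"] V1c by simp
  have I1: "integral {-h/4..h/4} \<phi> = 2 * A * s / k"
  proof -
    have eqc: "\<forall>x\<in>{-h/4..h/4}. \<phi> x = A * cos (k*x)"
    proof
      fix x assume x: "x \<in> {-h/4..h/4}"
      show "\<phi> x = A * cos (k*x)"
      proof (cases "\<bar>x\<bar> < h/4")
        case True then show ?thesis using core by simp
      next
        case False
        then have "x = h/4 \<or> x = -h/4" using x by auto
        then show ?thesis
        proof
          assume xp: "x = h/4" show ?thesis by (simp only: xp V1c)
        next
          assume xm: "x = -h/4" show ?thesis by (simp only: xm V1m)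
        qed
      qed
    qed
    have "integral {-h/4..h/4} \<phi> = integral {-h/4..h/4} (\<lambda>x. A * cos (k*x))"
      by (rule integral_cong) (use eqc in blast)
    also have "\<dots> = (\<lambda>x. A * sin (k*x) / k) (h/4) - (\<lambda>x. A * sin (k*x) / k) (-h/4)"
      by (rule ftc_int) (use hpos kne in \<open>auto intro!: derivative_eq_intros\<close>)
    also have "\<dots> = 2 * A * s / k" using a1 s_def by (simp add: field_simps)
    finally show ?thesis .
  qed
  have I2: "integral {h/4..3*h/4} \<phi> = C * h / 2 + 2 * D * s / k"
  proof -
    have eqc: "\<forall>x\<in>{h/4..3*h/4}. \<phi> x = C + D * cos (k * (x - h/2)) + E * sin (k * (x - h/2))"
      using act_r by auto
    have "integral {h/4..3*h/4} \<phi> = integral {h/4..3*h/4} (\<lambda>x. C + D * cos (k * (x - h/2)) + E * sin (k * (x - h/2)))"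
      by (rule integral_cong) (use eqc in blast)
    also have "\<dots> = (\<lambda>x. C * x + D * sin (k*(x-h/2)) / k - E * cos (k*(x-h/2)) / k) (3*h/4)
                   - (\<lambda>x. C * x + D * sin (k*(x-h/2)) / k - E * cos (k*(x-h/2)) / k) (h/4)"
      by (rule ftc_int) (use hpos kne in \<open>auto intro!: derivative_eq_intros\<close>)
    also have "\<dots> = C * h / 2 + 2 * D * s / k" using a1 s_def by (simp add: field_simps)
    finally show ?thesis .
  qed
  define Fa where "Fa = Tint_factor (h/H)"
  have pg: "patch_g h H (\<lambda>x t. exp (- K * k^2 * t) * \<phi> x) (h/2) 0
      = (2/h) * (2 * A * s / k) * Fa - (2/h) * (C * h / 2 + 2 * D * s / k)"
  proof -
    have ex0: "(\<lambda>y. exp (- K * k^2 * 0) * \<phi> y) = \<phi>" by simp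
    have c1: "h/4 < h/2 \<and> h/2 < 3*h/4" using hpos by simp
    have "patch_g h H (\<lambda>x t. exp (- K * k^2 * t) * \<phi> x) (h/2) 0
       = core_avg h (\<lambda>x t. exp (- K * k^2 * t) * \<phi> x) 0 * Fa
         - (2/h) * integral {h/4..3*h/4} (\<lambda>y. exp (- K * k^2 * 0) * \<phi> y)"
      unfolding patch_g_def Let_def Fa_def by (simp only: c1 simp_thms if_True)
    also have "core_avg h (\<lambda>x t. exp (- K * k^2 * t) * \<phi> x) 0
       = (2/h) * integral {-h/4..h/4} (\<lambda>y. exp (- K * k^2 * 0) * \<phi> y)"
      unfolding core_avg_def by simp
    finally show ?thesis by (simp only: ex0 I1 I2)
  qed
  define pgv where "pgv = (2/h) * (2 * A * s / k) * Fa - (2/h) * (C * h / 2 + 2 * D * s / k)"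
  have "- K * k^2 * (C + D) = K * (- D * k^2) + K * \<mu> / h^2 * pgv"
    using P T1 T2 ph2 pg pgv_def by simp
  then have "K * (0 - k^2 * C) = K * (\<mu> / h^2 * pgv)" by (simp add: algebra_simps)
  then have kc: "0 - k^2 * C = \<mu> / h^2 * pgv" using mult_left_cancel[of K "0 - k^2 * C" "\<mu> / h^2 * pgv"] assms(1) by auto
  define q where "q = k^2 * h^2 / \<mu>"
  define w where "w = 4 * s / (k * h)"
  have key: "(q - 1) * C = w * (D - Fa * A)"
  proof -
    have "q * C = - (h^2) / \<mu> * (0 - k^2 * C)" using assms(2) by (simp add: q_def field_simps)
    also have "\<dots> = - pgv" using kc assms(2) hpos by (simp add: field_simps)
    also have "\<dots> = C + w * (D - Fa * A)" using hpos kne by (simp add: pgv_def w_def field_simps)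
    finally show ?thesis by (simp add: algebra_simps)
  qed
  have G: "(1 - 7 * (h/H)^2 / 48) / (1 - (h/H)^2 / 48) = (1 + Fa) / 2"
  proof -
    have r2: "(h/H)^2 < 1" using assms(4,5) by (simp add: power_less_one_iff abs_less_iff)
    then have "1 - (h/H)^2 / 48 \<noteq> 0" by simp
    then show ?thesis unfolding Fa_def Tint_factor_def by (rule Gl)
  qed
  have ku: "k*h/2 = 2*u" by (simp add: u_def)
  have tg1: "cos (k*h/2) = c^2 - s^2" by (simp only: ku cos_double c_def s_def)
  have tg: "cos (k*h/2) = c^2 - s^2" "sin (k*h/4) = s" "cos (k*h/4) = c"
    using tg1 by (simp_all add: u_def c_def s_def)
  have goal: "(c^2 - s^2) * s * ((1 + Fa) / 2 * w + (q - 1) * c) = 0"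
  proof (cases "c^2 - s^2 = 0 \<or> s = 0")
    case True then show ?thesis by auto
  next
    case False
    then have cs: "c^2 - s^2 \<noteq> 0" and sne: "s \<noteq> 0" by auto
    have h1: "(A - B) * c = -2 * E * s" using e1 e3 by (simp add: algebra_simps)
    have h2: "(A - B) * s = -2 * E * c" using e2 e4 by (simp add: algebra_simps)
    have m1: "(A - B) * c * s = -2 * E * s * s" using h1 by simp
    have m2: "(A - B) * s * c = -2 * E * c * c" using h2 by simp
    have m: "(-2 * E * c * c) - (-2 * E * s * s) = (A - B) * s * c - (A - B) * c * s" using m1 m2 by linarith
    have m0: "(A - B) * s * c - (A - B) * c * s = 0" by (simp add: algebra_simps)
    have m3: "E * (c^2 - s^2) = E * c * c - E * s * s" by (simp add: power2_eq_square algebra_simps)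
    have "E * (c^2 - s^2) = 0" using m m0 m3 by linarith
    then have E0: "E = 0" using cs by simp
    then have AB: "A = B" using h2 sne by simp
    have "D * s = (- A) * s" using e2 E0 by simp
    then have DA: "D = - A" using mult_right_cancel[of s D "- A"] sne by blast
    have CA: "C = 2 * A * c" using e1 E0 DA by simp
    have Ane: "A \<noteq> 0"
    proof
      assume A0: "A = 0"
      then have z: "B = 0" "C = 0" "D = 0" "E = 0" using AB CA DA E0 by auto
      have zr: "\<And>y. -h \<le> y \<Longrightarrow> y \<le> h \<Longrightarrow> \<phi> y = 0"
      proof -
        fix y assume y: "-h \<le> y" "y \<le> h"
        consider "\<bar>y\<bar> < h/4" | "h/4 \<le> y \<and> y \<le> 3*h/4" | "h/4 \<le> -y \<and> -y \<le> 3*h/4"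
          | "3*h/4 \<le> y \<and> y \<le> h" | "3*h/4 \<le> -y \<and> -y \<le> h" using y by linarith
        then show "\<phi> y = 0"
        proof cases
          case 1 then show ?thesis using core[rule_format, of y] A0 by simp
        next
          case 2 then show ?thesis using act_r[rule_format, of y] z by simp
        next
          case 3 then show ?thesis using act_l[rule_format, of y] z by simp
        next
          case 4 then show ?thesis using buf_r[rule_format, of y] z by simp
        next
          case 5 then show ?thesis using buf_l[rule_format, of y] z by simp
        qed
      qed
      have pn: "\<And>y n. \<phi> (y + 2*h*real n) = \<phi> y"
      proof -
        fix y :: real and n :: nat
        show "\<phi> (y + 2*h*real n) = \<phi> y"
        proof (induction n)
          case 0 then show ?case by simp
        next
          case (Suc n)
          have "\<phi> (y + 2*h*real (Suc n)) = \<phi> ((y + 2*h*real n) + 2*h)" by (simp add: algebra_simps)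
          also have "\<dots> = \<phi> (y + 2*h*real n)" using periodic by simp
          finally show ?case using Suc by simp
        qed
      qed
      have all0: "\<phi> x = 0" for x
      proof -
        define n where "n = floor ((x + h) / (2*h))"
        define y where "y = x - 2*h* of_int n"
        have "of_int n \<le> (x + h) / (2*h)" "(x + h) / (2*h) < of_int n + 1"
          using n_def by linarith+
        then have "2*h* of_int n \<le> x + h" "x + h < 2*h*(of_int n + 1)"
          using hpos by (simp_all add: field_simps)
        then have yr: "-h \<le> y" "y \<le> h" using y_def by (simp_all add: algebra_simps)
        show ?thesis
        proof (cases "n \<ge> 0")
          case True
          have "x = y + 2*h*real (nat n)" using True y_def by simp
          then show ?thesis using pn zr yr by simp
        next
          case False
          have "y = x + 2*h*real (nat (-n))" using False y_def by simp
          then have "\<phi> y = \<phi> x" using pn by simp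
          then show ?thesis using zr yr by simp
        qed
      qed
      then show False using nonzero by simp
    qed
    have k2: "A * w + A * (Fa * w) + A * (c * (q * 2)) = A * (c * 2)"
      using key CA DA by (simp add: algebra_simps)
    have ex: "A * ((1 + Fa) / 2 * w + (q - 1) * c) = (A * w + A * (Fa * w) + A * (c * (q * 2)) - A * (c * 2)) / 2"
      by (simp add: field_simps)
    have "A * ((1 + Fa) / 2 * w + (q - 1) * c) = 0"
      using ex k2 by simp
    then show ?thesis using Ane by simp
  qed
  have wq: "(1+Fa)/2*(4/(k*h)) * s = (1+Fa)/2*w" "k^2*h^2/\<mu> = q" using kne hpos by (simp_all add: w_def q_def field_simps)
  show ?thesis by (simp only: tg G wq goal)
qed

end
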